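(* Let $(G_n)$ be a sequence of graphs with $\min_{u\in V}\delta_u=\omega(\log n)$, fix $p\in[0,1]$, and for each $n$ run the $(p,\mathcal B)$-Node-Deterministic-Majority dynamics on $G_n$ from the configuration in which every node is $\mathcal R$. (Fast disruption) If $p>1/2$, then $\Pr(\mathrm{vol}(B^{(2)})=\mathrm{vol}(V))=1-o(1)$ and $\Pr(\tau=1)=1-o(1)$. (Slow disruption) If $p<1/2$, then with $c=1/2-p$, for every $K>0$, $\Pr\big(\forall t\le n^K:\ \mathrm{vol}(R^{(t)})\ge\frac{1+c}{2}\mathrm{vol}(V)\big)=1-o(1)$, and consequently $\Pr(\tau>n^K)=1-o(1)$.
   Context: $G_n=(V,E)$, $V=\{1,\dots,n\}$, $N(u)$ neighbourhood, $\delta_u=|N(u)|$, $\mathrm{vol}(S)=\sum_{v\in S}\delta_v$; asymptotics as $n\to\infty$. States in $\{\mathcal R,\mathcal B\}$; $R^{(t)},B^{(t)}$ are the sets of nodes in each state at round $t$, and $\tau=\inf\{t\ge0:\mathrm{vol}(B^{(t)})/\mathrm{vol}(V)>1/2\}$. $(p,\mathcal B)$-Node-Deterministic-Majority: in each round $t\ge1$, every node $u$ independently takes state $\mathcal B$ with probability $p$; otherwise it adopts the state held at round $t-1$ by the majority of its whole neighbourhood (ties broken by some fixed rule, e.g. uniformly at random). *)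

theory Defs
  imports "HOL-Probability.Probability" "HOL-Library.Landau_Symbols"
begin

text \<open>A configuration is a function nat => bool; True means state B, False means state R.
  Nodes outside V are kept at the default value False.\<close>

definition verts :: "nat \<Rightarrow> nat set" where
  "verts n = {1..n}"

definition nbhd :: "nat \<Rightarrow> (nat \<Rightarrow> nat \<Rightarrow> bool) \<Rightarrow> nat \<Rightarrow> nat set" where
  "nbhd n E u = {v \<in> verts n. E u v}"

definition deg :: "nat \<Rightarrow> (nat \<Rightarrow> nat \<Rightarrow> bool) \<Rightarrow> nat \<Rightarrow> nat" where
  "deg n E u = card (nbhd n E u)"

definition vol :: "nat \<Rightarrow> (nat \<Rightarrow> nat \<Rightarrow> bool) \<Rightarrow> nat set \<Rightarrow> nat" where
  "vol n E S = (\<Sum>v\<in>S. deg n E v)"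

definition blue_set :: "nat \<Rightarrow> (nat \<Rightarrow> bool) \<Rightarrow> nat set" where
  "blue_set n c = {v \<in> verts n. c v}"

definition red_set :: "nat \<Rightarrow> (nat \<Rightarrow> bool) \<Rightarrow> nat set" where
  "red_set n c = {v \<in> verts n. \<not> c v}"

definition node_update ::
  "nat \<Rightarrow> (nat \<Rightarrow> nat \<Rightarrow> bool) \<Rightarrow> real \<Rightarrow> (nat \<Rightarrow> (nat \<Rightarrow> bool) \<Rightarrow> bool pmf)
     \<Rightarrow> (nat \<Rightarrow> bool) \<Rightarrow> nat \<Rightarrow> bool pmf" where
  "node_update n E p tie c u =
     do { b \<leftarrow> bernoulli_pmf p;
          if b then return_pmf True
          else (let nb = card {v \<in> nbhd n E u. c v};
                    nr = card {v \<in> nbhd n E u. \<not> c v}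
                in if nr < nb then return_pmf True
                   else if nb < nr then return_pmf False
                   else tie u c) }"

definition step ::
  "nat \<Rightarrow> (nat \<Rightarrow> nat \<Rightarrow> bool) \<Rightarrow> real \<Rightarrow> (nat \<Rightarrow> (nat \<Rightarrow> bool) \<Rightarrow> bool pmf)
     \<Rightarrow> (nat \<Rightarrow> bool) \<Rightarrow> (nat \<Rightarrow> bool) pmf" where
  "step n E p tie c = Pi_pmf (verts n) False (node_update n E p tie c)"

text \<open>Distribution of the trajectory up to round T, started from the all-R
  configuration: h t is the configuration at round t (for t \<le> T); for t > T the
  entries are the (all-R) initial configuration and carry no meaning.\<close>

primrec traj ::
  "nat \<Rightarrow> (nat \<Rightarrow> nat \<Rightarrow> bool) \<Rightarrow> real \<Rightarrow> (nat \<Rightarrow> (nat \<Rightarrow> bool) \<Rightarrow> bool pmf)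
     \<Rightarrow> nat \<Rightarrow> (nat \<Rightarrow> nat \<Rightarrow> bool) pmf" where
  "traj n E p tie 0 = return_pmf (\<lambda>t v. False)"
| "traj n E p tie (Suc T) =
     do { h \<leftarrow> traj n E p tie T;
          c \<leftarrow> step n E p tie (h T);
          return_pmf (h(Suc T := c)) }"

definition tau :: "nat \<Rightarrow> (nat \<Rightarrow> nat \<Rightarrow> bool) \<Rightarrow> (nat \<Rightarrow> nat \<Rightarrow> bool) \<Rightarrow> enat" where
  "tau n E h = Inf {enat t | t. real (vol n E (blue_set n (h t))) / real (vol n E (verts n)) > 1/2}"

end

theory Submission
  imports Defs
begin

lemma prob_bind_le:
  fixes M :: "'a pmf" and f :: "'a \<Rightarrow> 'b pmf"
  assumes "\<And>x. x \<in> set_pmf M \<Longrightarrow> x \<notin> B \<Longrightarrow> measure_pmf.prob (f x) A \<le> \<delta>" "\<delta> \<ge> 0"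
  shows "measure_pmf.prob (bind_pmf M f) A \<le> measure_pmf.prob M B + \<delta>"
proof -
  have "emeasure (measure_pmf (bind_pmf M f)) A = (\<integral>\<^sup>+x. emeasure (f x) A \<partial>M)" by simp
  also have "\<dots> \<le> (\<integral>\<^sup>+x. (indicator B x + ennreal \<delta>) \<partial>M)"
  proof (rule nn_integral_mono_AE, rule AE_pmfI)
    fix x assume x: "x \<in> set_pmf M"
    show "emeasure (measure_pmf (f x)) A \<le> indicator B x + ennreal \<delta>"
    proof (cases "x \<in> B")
      case True
      have "emeasure (measure_pmf (f x)) A \<le> 1" by (simp add: measure_pmf.emeasure_le_1)
      also have "\<dots> \<le> indicator B x + ennreal \<delta>" using True by simp
      finally show ?thesis .
    next
      case False
      then show ?thesis using assms(1)[OF x False] assms(2)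
        by (simp add: measure_pmf.emeasure_eq_measure)
    qed
  qed
  also have "\<dots> = emeasure M B + ennreal \<delta>"
    by (subst nn_integral_add) (auto simp: measure_pmf.emeasure_space_1)
  also have "\<dots> = ennreal (measure_pmf.prob M B + \<delta>)"
    using assms(2) by (subst ennreal_plus) (auto simp: measure_pmf.emeasure_eq_measure)
  finally have "ennreal (measure_pmf.prob (bind_pmf M f) A) \<le> ennreal (measure_pmf.prob M B + \<delta>)"
    by (simp add: measure_pmf.emeasure_eq_measure)
  then show ?thesis using assms(2) by (subst (asm) ennreal_le_iff) auto
qed

lemma binom_count:
  assumes "finite A" "S \<subseteq> A" "q \<in> {0..1}"
  shows "map_pmf (\<lambda>c. card {v\<in>S. c v}) (Pi_pmf A False (\<lambda>_. bernoulli_pmf q)) = binomial_pmf (card S) q"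
proof -
  have fS: "finite S" using assms finite_subset by blast
  have "binomial_pmf (card S) q = map_pmf (\<lambda>f. card {x\<in>S. f x}) (Pi_pmf S False (\<lambda>_. bernoulli_pmf q))"
    by (rule binomial_pmf_altdef') (use fS assms in auto)
  also have "Pi_pmf S False (\<lambda>_. bernoulli_pmf q) = map_pmf (\<lambda>f x. if x \<in> S then f x else False) (Pi_pmf A False (\<lambda>_. bernoulli_pmf q))"
    by (rule Pi_pmf_subset) (use assms in auto)
  also have "map_pmf (\<lambda>f. card {x\<in>S. f x}) (map_pmf (\<lambda>f x. if x \<in> S then f x else False) (Pi_pmf A False (\<lambda>_. bernoulli_pmf q)))
     = map_pmf (\<lambda>c. card {v\<in>S. c v}) (Pi_pmf A False (\<lambda>_. bernoulli_pmf q))"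
    unfolding map_pmf_comp by (intro map_pmf_cong refl arg_cong[where f=card]) auto
  finally show ?thesis ..
qed

lemma binom_tail:
  fixes \<epsilon> :: real
  assumes "finite A" "S \<subseteq> A" "q \<in> {0..1}" "card S > 0" "\<epsilon> \<ge> 0"
  shows "measure_pmf.prob (Pi_pmf A False (\<lambda>_. bernoulli_pmf q)) {c. real (card {v\<in>S. c v}) / card S \<le> q - \<epsilon>} \<le> exp (-2 * card S * \<epsilon>\<^sup>2)"
    and "measure_pmf.prob (Pi_pmf A False (\<lambda>_. bernoulli_pmf q)) {c. real (card {v\<in>S. c v}) / card S \<ge> q + \<epsilon>} \<le> exp (-2 * card S * \<epsilon>\<^sup>2)"
proof -
  interpret binomial_distribution "card S" q by unfold_locales (use assms in auto)
  have eq: "measure_pmf.prob (Pi_pmf A False (\<lambda>_. bernoulli_pmf q)) {c. P (card {v\<in>S. c v})}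
     = measure_pmf.prob (binomial_pmf (card S) q) {x. P x}" for P
    by (subst binom_count[symmetric, OF assms(1-3)]) (simp add: vimage_def)
  show "measure_pmf.prob (Pi_pmf A False (\<lambda>_. bernoulli_pmf q)) {c. real (card {v\<in>S. c v}) / card S \<le> q - \<epsilon>} \<le> exp (-2 * card S * \<epsilon>\<^sup>2)"
    using prob_le'[of \<epsilon>] assms(4,5) eq[of "\<lambda>x. real x / card S \<le> q - \<epsilon>"] by simp
  show "measure_pmf.prob (Pi_pmf A False (\<lambda>_. bernoulli_pmf q)) {c. real (card {v\<in>S. c v}) / card S \<ge> q + \<epsilon>} \<le> exp (-2 * card S * \<epsilon>\<^sup>2)"
    using prob_ge'[of \<epsilon>] assms(4,5) eq[of "\<lambda>x. real x / card S \<ge> q + \<epsilon>"] by simp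
qed

lemma finite_nbhd[simp]: "finite (nbhd n E u)" and nbhd_sub: "nbhd n E u \<subseteq> verts n"
  by (auto simp: nbhd_def verts_def)

lemma finite_verts[simp]: "finite (verts n)" by (simp add: verts_def)

lemma card_ind: "finite A \<Longrightarrow> (\<Sum>x\<in>A. if P x then 1 else 0 :: nat) = card {x\<in>A. P x}"
  by (simp add: sum.If_cases Int_def conj_commute)

lemma double_count:
  assumes sym: "\<And>u v. E u v \<Longrightarrow> E v u" and S: "S \<subseteq> verts n"
  shows "vol n E S = (\<Sum>u\<in>verts n. card {v\<in>nbhd n E u. v \<in> S})"
proof -
  have fS: "finite S" using S finite_subset finite_verts by blast
  have "vol n E S = (\<Sum>v\<in>S. \<Sum>u\<in>verts n. if E v u then 1 else 0)"
    unfolding vol_def deg_def nbhd_def by (simp add: card_ind)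
  also have "\<dots> = (\<Sum>u\<in>verts n. \<Sum>v\<in>S. if E v u then 1 else 0)"
    by (rule sum.swap)
  also have "\<dots> = (\<Sum>u\<in>verts n. \<Sum>v\<in>S. if E u v then 1 else 0)"
    by (intro sum.cong refl) (auto dest: sym)
  also have "\<dots> = (\<Sum>u\<in>verts n. card {v\<in>nbhd n E u. v \<in> S})"
  proof (rule sum.cong[OF refl])
    fix u assume "u \<in> verts n"
    have "{v\<in>nbhd n E u. v \<in> S} = {v\<in>S. E u v}" using S by (auto simp: nbhd_def)
    then show "(\<Sum>v\<in>S. if E u v then 1 else 0) = card {v\<in>nbhd n E u. v \<in> S}"
      using fS by (simp add: card_ind)
  qed
  finally show ?thesis .
qed

lemma vol_split: "vol n E (blue_set n c) + vol n E (red_set n c) = vol n E (verts n)"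
proof -
  have "verts n = blue_set n c \<union> red_set n c" "blue_set n c \<inter> red_set n c = {}"
    by (auto simp: blue_set_def red_set_def)
  then show ?thesis unfolding vol_def
    by (metis finite_Un finite_verts sum.union_disjoint)
qed

lemma count_split: "card {v\<in>nbhd n E u. c v} + card {v\<in>nbhd n E u. \<not> c v} = deg n E u"
proof -
  have "nbhd n E u = {v\<in>nbhd n E u. c v} \<union> {v\<in>nbhd n E u. \<not> c v}" by auto
  moreover have "card ({v\<in>nbhd n E u. c v} \<union> {v\<in>nbhd n E u. \<not> c v}) = card {v\<in>nbhd n E u. c v} + card {v\<in>nbhd n E u. \<not> c v}"
    by (rule card_Un_disjoint) auto
  ultimately show ?thesis unfolding deg_def by metis
qed

lemma blue_count: "u \<in> verts n \<Longrightarrow> {v\<in>nbhd n E u. v \<in> blue_set n c} = {v\<in>nbhd n E u. c v}"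
  and red_count: "u \<in> verts n \<Longrightarrow> {v\<in>nbhd n E u. v \<in> red_set n c} = {v\<in>nbhd n E u. \<not> c v}"
  by (auto simp: nbhd_def blue_set_def red_set_def)

lemma vol_blue: assumes sym: "\<And>u v. E u v \<Longrightarrow> E v u" shows "vol n E (blue_set n c) = (\<Sum>u\<in>verts n. card {v\<in>nbhd n E u. c v})"
proof -
  have "blue_set n c \<subseteq> verts n" by (auto simp: blue_set_def)
  from double_count[OF sym this] show ?thesis by (simp add: blue_count)
qed

lemma vol_red: assumes sym: "\<And>u v. E u v \<Longrightarrow> E v u" shows "vol n E (red_set n c) = (\<Sum>u\<in>verts n. card {v\<in>nbhd n E u. \<not> c v})"
proof -
  have "red_set n c \<subseteq> verts n" by (auto simp: red_set_def)
  from double_count[OF sym this] show ?thesis by (simp add: red_count)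
qed

lemma vol_verts: "vol n E (verts n) = (\<Sum>u\<in>verts n. deg n E u)" by (simp add: vol_def)

lemma step_red:
  assumes "\<forall>u\<in>verts n. card {v\<in>nbhd n E u. c v} < card {v\<in>nbhd n E u. \<not> c v}"
  shows "step n E p tie c = Pi_pmf (verts n) False (\<lambda>_. bernoulli_pmf p)"
  unfolding step_def
proof (rule Pi_pmf_cong[OF refl])
  fix u assume "u \<in> verts n"
  then have "node_update n E p tie c u = bind_pmf (bernoulli_pmf p) return_pmf"
    using assms unfolding node_update_def Let_def by (intro bind_pmf_cong) auto
  then show "node_update n E p tie c u = bernoulli_pmf p" by (simp add: bind_return_pmf')
qed simp

lemma step_blue:
  assumes "\<forall>u\<in>verts n. card {v\<in>nbhd n E u. \<not> c v} < card {v\<in>nbhd n E u. c v}"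
  shows "step n E p tie c = return_pmf (\<lambda>x. x \<in> verts n)"
proof -
  have "step n E p tie c = Pi_pmf (verts n) False (\<lambda>_. return_pmf True)"
    unfolding step_def
  proof (rule Pi_pmf_cong[OF refl])
    fix u assume "u \<in> verts n"
    then have "node_update n E p tie c u = bind_pmf (bernoulli_pmf p) (\<lambda>_. return_pmf True)"
      using assms unfolding node_update_def Let_def by (intro bind_pmf_cong) auto
    then show "node_update n E p tie c u = return_pmf True" by simp
  qed simp
  then show ?thesis by simp
qed

lemma traj_Suc_map: "traj n E p tie (Suc T) = bind_pmf (traj n E p tie T) (\<lambda>h. map_pmf (\<lambda>c. h(Suc T := c)) (step n E p tie (h T)))"
  by (simp add: map_pmf_def)

lemma traj_one: "traj n E p tie 1 = map_pmf (\<lambda>c. (\<lambda>t v. False)(1 := c)) (step n E p tie (\<lambda>v. False))"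
  by (simp add: map_pmf_def bind_return_pmf)

lemma traj_support: "h \<in> set_pmf (traj n E p tie T) \<Longrightarrow> t > T \<Longrightarrow> h t = (\<lambda>v. False)"
proof (induction T arbitrary: h)
  case 0 then show ?case by simp
next
  case (Suc T)
  then obtain h' c where "h' \<in> set_pmf (traj n E p tie T)" "h = h'(Suc T := c)"
    by (auto simp: traj_Suc_map)
  with Suc show ?case by auto
qed

lemma traj_bad:
  assumes init: "(\<lambda>v. False) \<in> G"
    and stp: "\<And>c. c \<in> G \<Longrightarrow> measure_pmf.prob (step n E p tie c) (- G) \<le> \<delta>"
    and d: "\<delta> \<ge> 0"
  shows "measure_pmf.prob (traj n E p tie T) {h. \<exists>t\<le>T. h t \<notin> G} \<le> real T * \<delta>"
proof (induction T)
  case 0 then show ?case using init by simp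
next
  case (Suc T)
  have "measure_pmf.prob (traj n E p tie (Suc T)) {h. \<exists>t\<le>Suc T. h t \<notin> G}
      \<le> measure_pmf.prob (traj n E p tie T) {h. \<exists>t\<le>T. h t \<notin> G} + \<delta>"
    unfolding traj_Suc_map
  proof (rule prob_bind_le[OF _ d])
    fix h assume h: "h \<notin> {h. \<exists>t\<le>T. h t \<notin> G}"
    have "(\<lambda>c. h(Suc T := c)) -` {h. \<exists>t\<le>Suc T. h t \<notin> G} = - G"
      using h by (auto simp: le_Suc_eq)
    then show "measure_pmf.prob (map_pmf (\<lambda>c. h(Suc T := c)) (step n E p tie (h T))) {h. \<exists>t\<le>Suc T. h t \<notin> G} \<le> \<delta>"
      using stp[of "h T"] h by simp
  qed
  then show ?case using Suc by (simp add: algebra_simps)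
qed

lemma union_tail:
  assumes q: "q \<in> {0..1}" and e: "\<epsilon> \<ge> 0" and m: "m > 0"
    and dm: "\<forall>u\<in>verts n. m \<le> real (deg n E u)"
  shows "measure_pmf.prob (Pi_pmf (verts n) False (\<lambda>_. bernoulli_pmf q))
           {c. \<exists>u\<in>verts n. real (card {v\<in>nbhd n E u. c v}) / deg n E u \<le> q - \<epsilon>} \<le> real n * exp (-2 * m * \<epsilon>\<^sup>2)"
    and "measure_pmf.prob (Pi_pmf (verts n) False (\<lambda>_. bernoulli_pmf q))
           {c. \<exists>u\<in>verts n. real (card {v\<in>nbhd n E u. c v}) / deg n E u \<ge> q + \<epsilon>} \<le> real n * exp (-2 * m * \<epsilon>\<^sup>2)"
proof -
  let ?M = "Pi_pmf (verts n) False (\<lambda>_. bernoulli_pmf q)"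
  have one: "exp (-2 * deg n E u * \<epsilon>\<^sup>2) \<le> exp (-2 * m * \<epsilon>\<^sup>2)" if "u \<in> verts n" for u
    using dm that e by (auto intro!: mult_right_mono simp: power2_eq_square)
  have cardv: "card (verts n) = n" by (simp add: verts_def)
  have gen: "measure_pmf.prob ?M {c. \<exists>u\<in>verts n. P u c} \<le> real n * exp (-2 * m * \<epsilon>\<^sup>2)"
    if Pu: "\<And>u. u \<in> verts n \<Longrightarrow> measure_pmf.prob ?M {c. P u c} \<le> exp (-2 * deg n E u * \<epsilon>\<^sup>2)" for P
  proof -
    have "{c. \<exists>u\<in>verts n. P u c} = (\<Union>u\<in>verts n. {c. P u c})" by auto
    then have "measure_pmf.prob ?M {c. \<exists>u\<in>verts n. P u c} \<le> (\<Sum>u\<in>verts n. measure_pmf.prob ?M {c. P u c})"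
      by (simp add: measure_pmf.finite_measure_subadditive_finite)
    also have "\<dots> \<le> (\<Sum>u\<in>verts n. exp (-2 * m * \<epsilon>\<^sup>2))"
      by (rule sum_mono) (use Pu one order_trans in blast)
    also have "\<dots> = real n * exp (-2 * m * \<epsilon>\<^sup>2)" by (simp add: cardv)
    finally show ?thesis .
  qed
  have dpos: "card (nbhd n E u) > 0" if "u \<in> verts n" for u
    using dm m that unfolding deg_def by fastforce
  show "measure_pmf.prob ?M
           {c. \<exists>u\<in>verts n. real (card {v\<in>nbhd n E u. c v}) / deg n E u \<le> q - \<epsilon>} \<le> real n * exp (-2 * m * \<epsilon>\<^sup>2)"
    by (rule gen) (unfold deg_def, rule binom_tail(1)[OF finite_verts nbhd_sub q dpos e])
  show "measure_pmf.prob ?M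
           {c. \<exists>u\<in>verts n. real (card {v\<in>nbhd n E u. c v}) / deg n E u \<ge> q + \<epsilon>} \<le> real n * exp (-2 * m * \<epsilon>\<^sup>2)"
    by (rule gen) (unfold deg_def, rule binom_tail(2)[OF finite_verts nbhd_sub q dpos e])
qed

lemma prob_ge_compl:
  assumes "\<And>x. x \<in> set_pmf M \<Longrightarrow> x \<notin> A \<Longrightarrow> x \<in> B"
  shows "measure_pmf.prob M A \<ge> 1 - measure_pmf.prob M B"
proof -
  have "measure_pmf.prob M (- A) \<le> measure_pmf.prob M B"
    by (rule measure_pmf.finite_measure_mono_AE) (use assms in \<open>auto intro!: AE_pmfI\<close>)
  moreover have "measure_pmf.prob M (- A) = 1 - measure_pmf.prob M A"
    using measure_pmf.prob_compl[of A M] by (simp add: Compl_eq_Diff_UNIV)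
  ultimately show ?thesis by simp
qed

lemma tend1:
  assumes "eventually (\<lambda>n. 1 - 1 / real n \<le> f n) sequentially" "\<And>n. f n \<le> (1::real)"
  shows "f \<longlonglongrightarrow> 1"
proof (rule tendsto_sandwich[where f="\<lambda>n. 1 - 1 / real n" and h="\<lambda>_. 1"])
  show "((\<lambda>n. 1 - 1 / real n) \<longlongrightarrow> 1) sequentially"
    using tendsto_diff[OF tendsto_const lim_1_over_n, of 1] by simp
qed (use assms in auto)

lemma asymp:
  fixes m :: "nat \<Rightarrow> real"
  assumes o: "(\<lambda>n. ln (real n)) \<in> o(m)" and mnn: "\<And>n. m n \<ge> 0"
    and e: "\<epsilon> > 0" and K: "K \<ge> 0"
  shows "eventually (\<lambda>n. 3 \<le> n \<and> 0 < m n \<and> real n powr K * (real n * exp (-2 * m n * \<epsilon>\<^sup>2)) \<le> 1 / real n) sequentially"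
proof -
  define C where "C = max 1 ((K + 2) / (2 * \<epsilon>\<^sup>2))"
  have e2: "2 * \<epsilon>\<^sup>2 > 0" using e by simp
  have C1: "C \<ge> 1" "C \<ge> (K + 2) / (2 * \<epsilon>\<^sup>2)" by (simp_all add: C_def)
  have C: "C > 0" "C \<ge> 1" "C * (2 * \<epsilon>\<^sup>2) \<ge> K + 2"
    using C1 e2 by (simp_all add: pos_divide_le_eq)
  have "eventually (\<lambda>n. norm (ln (real n)) \<le> (1 / C) * norm (m n)) sequentially"
    by (rule landau_o.smallD[OF o]) (use C in simp)
  moreover have "eventually (\<lambda>n. n \<ge> 3) sequentially" by (rule eventually_ge_at_top)
  ultimately show ?thesis
  proof eventually_elim
    case (elim n)
    have n3: "real n \<ge> 3" using elim by simp
    have ln1: "ln (real n) \<ge> 1"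
    proof -
      have "exp 1 \<le> real n" using n3 exp_le by linarith
      then show ?thesis using ln_le_cancel_iff[of "exp 1" "real n"] n3 by simp
    qed
    have "\<bar>ln (real n)\<bar> \<le> 1 / C * \<bar>m n\<bar>" using elim by simp
    then have "ln (real n) \<le> m n / C" using ln1 mnn[of n] by (simp add: abs_of_nonneg)
    then have mC: "m n \<ge> C * ln (real n)" using C by (simp add: pos_le_divide_eq mult.commute)
    have "C * ln (real n) \<ge> 1 * 1" using C ln1 by (intro mult_mono) auto
    then have mpos: "m n > 0" using mC by linarith
    have "2 * m n * \<epsilon>\<^sup>2 \<ge> (K + 2) * ln (real n)"
    proof -
      have "(K + 2) * ln (real n) \<le> (C * (2 * \<epsilon>\<^sup>2)) * ln (real n)"
        using C ln1 by (intro mult_right_mono) auto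
      also have "\<dots> = 2 * \<epsilon>\<^sup>2 * (C * ln (real n))" by simp
      also have "\<dots> \<le> 2 * \<epsilon>\<^sup>2 * m n" using mC by (intro mult_left_mono) auto
      finally show ?thesis by (simp add: mult_ac)
    qed
    then have "exp (-2 * m n * \<epsilon>\<^sup>2) \<le> exp (- (K + 2) * ln (real n))" by (simp add: algebra_simps)
    also have "\<dots> = real n powr (-(K+2))" using n3 by (simp add: powr_def)
    finally have ex: "exp (-2 * m n * \<epsilon>\<^sup>2) \<le> real n powr (-(K+2))" .
    have "real n powr K * (real n * exp (-2 * m n * \<epsilon>\<^sup>2)) \<le> real n powr K * (real n * real n powr (-(K+2)))"
      using ex n3 by (intro mult_left_mono) auto
    also have "\<dots> = real n powr K * real n powr (-(K+1))"
      using n3 powr_mult_base[of "real n" "-(K+2)"] by (simp add: algebra_simps)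
    also have "\<dots> = real n powr (K + (-(K+1)))"
      by (subst powr_add) simp
    also have "\<dots> = 1 / real n" using n3 by (simp add: powr_minus_divide)
    finally show ?case using mpos elim by simp
  qed
qed

lemma vol_empty[simp]: "vol n E {} = 0" by (simp add: vol_def)

lemma blue_false[simp]: "blue_set n (\<lambda>v. False) = {}" by (simp add: blue_set_def)

lemma tau_one:
  assumes sym: "\<And>u v. E u v \<Longrightarrow> E v u" and n: "n \<ge> 1"
    and good: "\<forall>u\<in>verts n. card {v\<in>nbhd n E u. \<not> c v} < card {v\<in>nbhd n E u. c v}"
  shows "tau n E ((\<lambda>t v. False)(1 := c)) = 1"
proof -
  have ne: "verts n \<noteq> {}" using n by (auto simp: verts_def)
  have "vol n E (red_set n c) < vol n E (blue_set n c)"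
  proof -
    have "(\<Sum>u\<in>verts n. card {v\<in>nbhd n E u. \<not> c v}) < (\<Sum>u\<in>verts n. card {v\<in>nbhd n E u. c v})"
      by (rule sum_strict_mono) (use good ne in auto)
    then show ?thesis by (simp only: vol_blue[where E=E, OF sym] vol_red[where E=E, OF sym])
  qed
  moreover have "vol n E (blue_set n c) + vol n E (red_set n c) = vol n E (verts n)" by (rule vol_split)
  ultimately have r: "real (vol n E (blue_set n c)) / real (vol n E (verts n)) > 1/2"
    by (simp add: field_simps)
  have "{enat t | t. real (vol n E (blue_set n (((\<lambda>t v. False)(1 := c)) t))) / real (vol n E (verts n)) > 1/2} = {enat 1}"
    using r by auto
  then show ?thesis unfolding tau_def by (simp add: one_enat_def)
qed

lemma tau_one':
  assumes sym: "\<And>u v. E u v \<Longrightarrow> E v u" and n: "n \<ge> 1"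
    and "tau n E ((\<lambda>t v. False)(1 := c)) \<noteq> 1"
  shows "\<exists>u\<in>verts n. \<not> card {v\<in>nbhd n E u. \<not> c v} < card {v\<in>nbhd n E u. c v}"
  using tau_one[where E=E, OF sym n, of c] assms(3) by blast

lemma fast_rounds:
  assumes sym: "\<And>u v. E u v \<Longrightarrow> E v u" and n: "n \<ge> 1"
    and p: "1/2 < p" "p \<le> 1" and m: "m > 0" and dm: "\<forall>u\<in>verts n. m \<le> real (deg n E u)"
  shows "measure_pmf.prob (traj n E p tie 1) {h. tau n E h = 1} \<ge> 1 - real n * exp (-2 * m * (p - 1/2)\<^sup>2)"
    and "measure_pmf.prob (traj n E p tie 2) {h. vol n E (blue_set n (h 2)) = vol n E (verts n)}
           \<ge> 1 - real n * exp (-2 * m * (p - 1/2)\<^sup>2)"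
proof -
  let ?Q = "Pi_pmf (verts n) False (\<lambda>_. bernoulli_pmf p)"
  define BG where "BG = {c. \<forall>u\<in>verts n. card {v\<in>nbhd n E u. \<not> c v} < card {v\<in>nbhd n E u. c v}}"
  have dpos: "deg n E u > 0" if "u \<in> verts n" for u using dm m that by fastforce
  have step0: "step n E p tie (\<lambda>v. False) = ?Q"
    by (rule step_red) (use dpos in \<open>auto simp: deg_def\<close>)
  have bad: "measure_pmf.prob ?Q (- BG) \<le> real n * exp (-2 * m * (p - 1/2)\<^sup>2)"
  proof -
    have "- BG \<subseteq> {c. \<exists>u\<in>verts n. real (card {v\<in>nbhd n E u. c v}) / deg n E u \<le> p - (p - 1/2)}"
    proof
      fix c assume "c \<in> - BG"
      then obtain u where u: "u \<in> verts n" "card {v\<in>nbhd n E u. c v} \<le> card {v\<in>nbhd n E u. \<not> c v}"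
        unfolding BG_def by (auto simp: not_less)
      have "card {v\<in>nbhd n E u. c v} + card {v\<in>nbhd n E u. \<not> c v} = deg n E u" by (rule count_split)
      then have "real (card {v\<in>nbhd n E u. c v}) / deg n E u \<le> 1/2"
        using u dpos[OF u(1)] by (simp add: field_simps)
      then show "c \<in> {c. \<exists>u\<in>verts n. real (card {v\<in>nbhd n E u. c v}) / deg n E u \<le> p - (p - 1/2)}"
        using u by auto
    qed
    then have "measure_pmf.prob ?Q (- BG) \<le> measure_pmf.prob ?Q {c. \<exists>u\<in>verts n. real (card {v\<in>nbhd n E u. c v}) / deg n E u \<le> p - (p - 1/2)}"
      by (intro measure_pmf.finite_measure_mono) auto
    also have "\<dots> \<le> real n * exp (-2 * m * (p - 1/2)\<^sup>2)"
      by (rule union_tail(1)) (use p m dm in auto)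
    finally show ?thesis .
  qed
  have t1: "traj n E p tie 1 = map_pmf (\<lambda>c. (\<lambda>t v. False)(1 := c)) ?Q"
    by (simp only: traj_one step0)
  show "measure_pmf.prob (traj n E p tie 1) {h. tau n E h = 1} \<ge> 1 - real n * exp (-2 * m * (p - 1/2)\<^sup>2)"
  proof -
    have "measure_pmf.prob (traj n E p tie 1) {h. tau n E h = 1} \<ge> 1 - measure_pmf.prob (traj n E p tie 1) {h. h 1 \<in> - BG}"
      unfolding t1 by (rule prob_ge_compl) (use tau_one'[where E=E, OF sym n] in \<open>auto simp: BG_def\<close>)
    moreover have "measure_pmf.prob (traj n E p tie 1) {h. h 1 \<in> - BG} = measure_pmf.prob ?Q (- BG)"
      unfolding t1 by (simp add: vimage_def Compl_eq)
    ultimately show ?thesis using bad by linarith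
  qed
  show "measure_pmf.prob (traj n E p tie 2) {h. vol n E (blue_set n (h 2)) = vol n E (verts n)}
           \<ge> 1 - real n * exp (-2 * m * (p - 1/2)\<^sup>2)"
  proof -
    let ?A = "{h. vol n E (blue_set n (h 2)) = vol n E (verts n)}"
    have t2: "traj n E p tie 2 = bind_pmf (traj n E p tie 1) (\<lambda>h. map_pmf (\<lambda>c. h(2 := c)) (step n E p tie (h 1)))"
      using traj_Suc_map[of n E p tie 1] by (simp add: numeral_2_eq_2)
    have "measure_pmf.prob (traj n E p tie 2) (- ?A) \<le> measure_pmf.prob (traj n E p tie 1) {h. h 1 \<in> - BG} + 0"
      unfolding t2
    proof (rule prob_bind_le)
      fix h :: "nat \<Rightarrow> nat \<Rightarrow> bool" assume "h \<notin> {h. h 1 \<in> - BG}"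
      then have "step n E p tie (h 1) = return_pmf (\<lambda>x. x \<in> verts n)"
        by (intro step_blue) (auto simp: BG_def)
      moreover have "blue_set n (\<lambda>x. x \<in> verts n) = verts n" by (auto simp: blue_set_def)
      ultimately show "measure_pmf.prob (map_pmf (\<lambda>c. h(2 := c)) (step n E p tie (h 1))) (- ?A) \<le> 0"
        by simp
    qed simp
    moreover have "measure_pmf.prob (traj n E p tie 1) {h. h 1 \<in> - BG} = measure_pmf.prob ?Q (- BG)"
      unfolding t1 by (simp add: vimage_def Compl_eq)
    moreover have "measure_pmf.prob (traj n E p tie 2) (- ?A) = 1 - measure_pmf.prob (traj n E p tie 2) ?A"
      using measure_pmf.prob_compl[of ?A "traj n E p tie 2"] by (simp add: Compl_eq_Diff_UNIV)
    ultimately show ?thesis using bad by linarith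
  qed
qed

lemma red_vol_ge:
  assumes sym: "\<And>u v. E u v \<Longrightarrow> E v u"
    and g: "\<forall>u\<in>verts n. a * real (deg n E u) \<le> real (card {v\<in>nbhd n E u. \<not> c v})"
  shows "a * real (vol n E (verts n)) \<le> real (vol n E (red_set n c))"
proof -
  have "a * real (vol n E (verts n)) = (\<Sum>u\<in>verts n. a * real (deg n E u))"
    by (simp add: vol_verts sum_distrib_left)
  also have "\<dots> \<le> (\<Sum>u\<in>verts n. real (card {v\<in>nbhd n E u. \<not> c v}))"
    by (rule sum_mono) (use g in auto)
  also have "\<dots> = real (vol n E (red_set n c))"
    by (simp only: vol_red[where E=E, OF sym] of_nat_sum)
  finally show ?thesis .
qed

lemma slow_rounds:
  assumes sym: "\<And>u v. E u v \<Longrightarrow> E v u"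
    and p: "0 \<le> p" "p < 1/2" and m: "m > 0" and dm: "\<forall>u\<in>verts n. m \<le> real (deg n E u)"
  shows "measure_pmf.prob (traj n E p tie T)
            {h. \<forall>t \<le> T. real (vol n E (red_set n (h t))) \<ge> (1 + (1/2 - p)) / 2 * real (vol n E (verts n))}
           \<ge> 1 - real T * (real n * exp (-2 * m * ((1/2 - p)/2)\<^sup>2))"
    and "measure_pmf.prob (traj n E p tie T) {h. tau n E h > enat T}
           \<ge> 1 - real T * (real n * exp (-2 * m * ((1/2 - p)/2)\<^sup>2))"
proof -
  define a where "a = (1 + (1/2 - p)) / 2"
  define \<epsilon> where "\<epsilon> = (1/2 - p) / 2"
  define \<delta> where "\<delta> = real n * exp (-2 * m * \<epsilon>\<^sup>2)"
  let ?Q = "Pi_pmf (verts n) False (\<lambda>_. bernoulli_pmf p)"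
  define G where "G = {c. \<forall>u\<in>verts n. a * real (deg n E u) \<le> real (card {v\<in>nbhd n E u. \<not> c v})}"
  have dpos: "deg n E u > 0" if "u \<in> verts n" for u using dm m that by fastforce
  have a: "a > 1/2" "a \<le> 1" "1 - a = p + \<epsilon>" "\<epsilon> \<ge> 0" using p by (auto simp: a_def \<epsilon>_def field_simps)
  have d0: "\<delta> \<ge> 0" by (simp add: \<delta>_def)
  have init: "(\<lambda>v. False) \<in> G"
    using a unfolding G_def deg_def by (auto intro!: mult_left_le_one_le)
  have stp: "measure_pmf.prob (step n E p tie c) (- G) \<le> \<delta>" if cG: "c \<in> G" for c
  proof -
    have sQ: "step n E p tie c = ?Q"
    proof (rule step_red, intro ballI)
      fix u assume u: "u \<in> verts n"
      have s: "card {v\<in>nbhd n E u. c v} + card {v\<in>nbhd n E u. \<not> c v} = deg n E u" by (rule count_split)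
      have "a * real (deg n E u) \<le> real (card {v\<in>nbhd n E u. \<not> c v})" using cG u by (auto simp: G_def)
      moreover have "real (deg n E u) / 2 < a * real (deg n E u)" using a dpos[OF u] by simp
      ultimately show "card {v\<in>nbhd n E u. c v} < card {v\<in>nbhd n E u. \<not> c v}" using s by linarith
    qed
    have sub: "- G \<subseteq> {c. \<exists>u\<in>verts n. real (card {v\<in>nbhd n E u. c v}) / deg n E u \<ge> p + \<epsilon>}"
    proof
      fix c assume "c \<in> - G"
      then obtain u where u: "u \<in> verts n" "real (card {v\<in>nbhd n E u. \<not> c v}) < a * real (deg n E u)"
        unfolding G_def by (auto simp: not_le)
      have "card {v\<in>nbhd n E u. c v} + card {v\<in>nbhd n E u. \<not> c v} = deg n E u" by (rule count_split)
      then have "real (card {v\<in>nbhd n E u. c v}) \<ge> (1 - a) * real (deg n E u)"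
        using u by (simp add: algebra_simps)
      then have "real (card {v\<in>nbhd n E u. c v}) / deg n E u \<ge> p + \<epsilon>"
        using dpos[OF u(1)] a by (simp add: field_simps)
      then show "c \<in> {c. \<exists>u\<in>verts n. real (card {v\<in>nbhd n E u. c v}) / deg n E u \<ge> p + \<epsilon>}"
        using u by auto
    qed
    have "measure_pmf.prob ?Q (- G) \<le> measure_pmf.prob ?Q {c. \<exists>u\<in>verts n. real (card {v\<in>nbhd n E u. c v}) / deg n E u \<ge> p + \<epsilon>}"
      using sub by (intro measure_pmf.finite_measure_mono) auto
    also have "\<dots> \<le> \<delta>" unfolding \<delta>_def
      by (rule union_tail(2)) (use p m dm a in auto)
    finally show ?thesis using sQ by simp
  qed
  have bad: "measure_pmf.prob (traj n E p tie T) {h. \<exists>t\<le>T. h t \<notin> G} \<le> real T * \<delta>"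
    by (rule traj_bad[OF init stp d0])
  show "measure_pmf.prob (traj n E p tie T)
            {h. \<forall>t \<le> T. real (vol n E (red_set n (h t))) \<ge> (1 + (1/2 - p)) / 2 * real (vol n E (verts n))}
           \<ge> 1 - real T * (real n * exp (-2 * m * ((1/2 - p)/2)\<^sup>2))"
  proof -
    have "measure_pmf.prob (traj n E p tie T)
            {h. \<forall>t \<le> T. real (vol n E (red_set n (h t))) \<ge> (1 + (1/2 - p)) / 2 * real (vol n E (verts n))}
          \<ge> 1 - measure_pmf.prob (traj n E p tie T) {h. \<exists>t\<le>T. h t \<notin> G}"
    proof (rule prob_ge_compl)
      fix h assume "h \<notin> {h. \<forall>t \<le> T. real (vol n E (red_set n (h t))) \<ge> (1 + (1/2 - p)) / 2 * real (vol n E (verts n))}"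
      then obtain t where t: "t \<le> T" "\<not> real (vol n E (red_set n (h t))) \<ge> a * real (vol n E (verts n))"
        by (auto simp: a_def)
      have "h t \<notin> G"
        using t(2) red_vol_ge[where E=E, OF sym, of n a "h t"] by (auto simp: G_def)
      then show "h \<in> {h. \<exists>t\<le>T. h t \<notin> G}" using t by auto
    qed
    then show ?thesis using bad unfolding \<delta>_def \<epsilon>_def by linarith
  qed
  show "measure_pmf.prob (traj n E p tie T) {h. tau n E h > enat T}
           \<ge> 1 - real T * (real n * exp (-2 * m * ((1/2 - p)/2)\<^sup>2))"
  proof -
    have "measure_pmf.prob (traj n E p tie T) {h. tau n E h > enat T}
          \<ge> 1 - measure_pmf.prob (traj n E p tie T) {h. \<exists>t\<le>T. h t \<notin> G}"
    proof (rule prob_ge_compl)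
      fix h assume hs: "h \<in> set_pmf (traj n E p tie T)" and hn: "h \<notin> {h. tau n E h > enat T}"
      show "h \<in> {h. \<exists>t\<le>T. h t \<notin> G}"
      proof (rule ccontr)
        assume "h \<notin> {h. \<exists>t\<le>T. h t \<notin> G}"
        then have allG: "\<forall>t\<le>T. h t \<in> G" by auto
        have "\<not> real (vol n E (blue_set n (h t))) / real (vol n E (verts n)) > 1/2" for t
        proof (cases "t \<le> T")
          case True
          have r: "a * real (vol n E (verts n)) \<le> real (vol n E (red_set n (h t)))"
            using red_vol_ge[where E=E, OF sym, of n a "h t"] allG True by (auto simp: G_def)
          have sp: "real (vol n E (blue_set n (h t))) + real (vol n E (red_set n (h t))) = real (vol n E (verts n))"
            using vol_split[of n E "h t"] by linarith
          show ?thesis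
          proof (cases "vol n E (verts n) = 0")
            case True then show ?thesis by simp
          next
            case False
            then have vp: "real (vol n E (verts n)) > 0" by simp
            have "real (vol n E (blue_set n (h t))) \<le> (1 - a) * real (vol n E (verts n))"
              using r sp by (simp add: algebra_simps)
            also have "\<dots> \<le> 1/2 * real (vol n E (verts n))" using a vp by (intro mult_right_mono) auto
            finally show ?thesis using vp by (simp add: field_simps)
          qed
        next
          case False
          then have "h t = (\<lambda>v. False)" using traj_support[OF hs] by simp
          then show ?thesis by simp
        qed
        then have "tau n E h = top" unfolding tau_def by (simp add: top_enat_def)
        then show False using hn by (simp add: top_enat_def)
      qed
    qed
    then show ?thesis using bad unfolding \<delta>_def \<epsilon>_def by linarith
  qed
qed

theorem proposition6p3:
  fixes E :: "nat \<Rightarrow> nat \<Rightarrow> nat \<Rightarrow> bool"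
    and tie :: "nat \<Rightarrow> nat \<Rightarrow> (nat \<Rightarrow> bool) \<Rightarrow> bool pmf"
    and p :: real
  assumes sym: "\<And>n u v. E n u v \<Longrightarrow> E n v u"
    and irrefl: "\<And>n u. \<not> E n u u"
    and mindeg: "(\<lambda>n. ln (real n)) \<in> o(\<lambda>n. real (Min (deg n (E n) ` verts n)))"
    and p: "0 \<le> p" "p \<le> 1"
  shows
    "(p > 1/2 \<longrightarrow>
        ((\<lambda>n. measure_pmf.prob (traj n (E n) p (tie n) 2)
            {h. vol n (E n) (blue_set n (h 2)) = vol n (E n) (verts n)}) \<longlonglongrightarrow> 1)
      \<and> ((\<lambda>n. measure_pmf.prob (traj n (E n) p (tie n) 1)
            {h. tau n (E n) h = 1}) \<longlonglongrightarrow> 1))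
   \<and> (p < 1/2 \<longrightarrow> (\<forall>K::real. K > 0 \<longrightarrow>
        ((\<lambda>n. measure_pmf.prob (traj n (E n) p (tie n) (nat \<lfloor>real n powr K\<rfloor>))
            {h. \<forall>t \<le> nat \<lfloor>real n powr K\<rfloor>.
                  real (vol n (E n) (red_set n (h t)))
                    \<ge> (1 + (1/2 - p)) / 2 * real (vol n (E n) (verts n))}) \<longlonglongrightarrow> 1)
      \<and> ((\<lambda>n. measure_pmf.prob (traj n (E n) p (tie n) (nat \<lfloor>real n powr K\<rfloor>))
            {h. tau n (E n) h > enat (nat \<lfloor>real n powr K\<rfloor>)}) \<longlonglongrightarrow> 1)))"
proof -
  define m where "m = (\<lambda>n. real (Min (deg n (E n) ` verts n)))"
  have o: "(\<lambda>n. ln (real n)) \<in> o(m)" using mindeg unfolding m_def .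
  have mnn: "\<And>n. m n \<ge> 0" by (simp add: m_def)
  have dm: "\<forall>u\<in>verts n. m n \<le> real (deg n (E n) u)" for n
    unfolding m_def by (auto intro!: Min_le)
  have symn: "\<And>u v. E n u v \<Longrightarrow> E n v u" for n using sym by blast
  have le1: "\<And>M A. measure_pmf.prob M A \<le> 1" by (rule measure_pmf.prob_le_1)
  have fast: "(\<lambda>n. measure_pmf.prob (traj n (E n) p (tie n) 2)
            {h. vol n (E n) (blue_set n (h 2)) = vol n (E n) (verts n)}) \<longlonglongrightarrow> 1
      \<and> (\<lambda>n. measure_pmf.prob (traj n (E n) p (tie n) 1)
            {h. tau n (E n) h = 1}) \<longlonglongrightarrow> 1" if p2: "p > 1/2"
  proof -
    have ev: "eventually (\<lambda>n. 3 \<le> n \<and> 0 < m n \<and> real n powr 0 * (real n * exp (-2 * m n * (p - 1/2)\<^sup>2)) \<le> 1 / real n) sequentially"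
      by (rule asymp[OF o mnn]) (use p2 in auto)
    show ?thesis
    proof (intro conjI tend1 le1)
      show "eventually (\<lambda>n. 1 - 1 / real n \<le> measure_pmf.prob (traj n (E n) p (tie n) 2)
            {h. vol n (E n) (blue_set n (h 2)) = vol n (E n) (verts n)}) sequentially"
        using ev
      proof eventually_elim
        case (elim n)
        then show ?case
          using fast_rounds(2)[where E="E n" and p=p and m="m n" and n=n and tie="tie n", OF symn] p p2 dm[of n] by auto
      qed
      show "eventually (\<lambda>n. 1 - 1 / real n \<le> measure_pmf.prob (traj n (E n) p (tie n) 1)
            {h. tau n (E n) h = 1}) sequentially"
        using ev
      proof eventually_elim
        case (elim n)
        then show ?case
          using fast_rounds(1)[where E="E n" and p=p and m="m n" and n=n and tie="tie n", OF symn] p p2 dm[of n] by auto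
      qed
    qed
  qed
  have slow: "((\<lambda>n. measure_pmf.prob (traj n (E n) p (tie n) (nat \<lfloor>real n powr K\<rfloor>))
            {h. \<forall>t \<le> nat \<lfloor>real n powr K\<rfloor>.
                  real (vol n (E n) (red_set n (h t)))
                    \<ge> (1 + (1/2 - p)) / 2 * real (vol n (E n) (verts n))}) \<longlonglongrightarrow> 1)
      \<and> ((\<lambda>n. measure_pmf.prob (traj n (E n) p (tie n) (nat \<lfloor>real n powr K\<rfloor>))
            {h. tau n (E n) h > enat (nat \<lfloor>real n powr K\<rfloor>)}) \<longlonglongrightarrow> 1)"
    if p2: "p < 1/2" and K: "K > 0" for K
  proof -
    have ev: "eventually (\<lambda>n. 3 \<le> n \<and> 0 < m n \<and> real n powr K * (real n * exp (-2 * m n * ((1/2 - p)/2)\<^sup>2)) \<le> 1 / real n) sequentially"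
      by (rule asymp[OF o mnn]) (use p2 K in auto)
    have Tle: "real (nat \<lfloor>real n powr K\<rfloor>) \<le> real n powr K" for n
    proof -
      have "0 \<le> \<lfloor>real n powr K\<rfloor>" by simp
      then have "real (nat \<lfloor>real n powr K\<rfloor>) = real_of_int \<lfloor>real n powr K\<rfloor>" by simp
      then show ?thesis using of_int_floor_le[of "real n powr K"] by linarith
    qed
    have key: "real (nat \<lfloor>real n powr K\<rfloor>) * (real n * exp (-2 * m n * ((1/2 - p)/2)\<^sup>2)) \<le> 1 / real n"
      if "real n powr K * (real n * exp (-2 * m n * ((1/2 - p)/2)\<^sup>2)) \<le> 1 / real n" for n
      using that Tle[of n] by (meson mult_right_mono order_trans mult_nonneg_nonneg of_nat_0_le_iff exp_ge_zero)
    show ?thesis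
    proof (intro conjI tend1 le1)
      show "eventually (\<lambda>n. 1 - 1 / real n \<le> measure_pmf.prob (traj n (E n) p (tie n) (nat \<lfloor>real n powr K\<rfloor>))
            {h. \<forall>t \<le> nat \<lfloor>real n powr K\<rfloor>.
                  real (vol n (E n) (red_set n (h t)))
                    \<ge> (1 + (1/2 - p)) / 2 * real (vol n (E n) (verts n))}) sequentially"
        using ev
      proof eventually_elim
        case (elim n)
        then show ?case
          using slow_rounds(1)[where E="E n" and p=p and m="m n" and n=n and tie="tie n" and T="nat \<lfloor>real n powr K\<rfloor>", OF symn] p p2 dm[of n] key[of n] by auto
      qed
      show "eventually (\<lambda>n. 1 - 1 / real n \<le> measure_pmf.prob (traj n (E n) p (tie n) (nat \<lfloor>real n powr K\<rfloor>))
            {h. tau n (E n) h > enat (nat \<lfloor>real n powr K\<rfloor>)}) sequentially"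
        using ev
      proof eventually_elim
        case (elim n)
        then show ?case
          using slow_rounds(2)[where E="E n" and p=p and m="m n" and n=n and tie="tie n" and T="nat \<lfloor>real n powr K\<rfloor>", OF symn] p p2 dm[of n] key[of n] by auto
      qed
    qed
  qed
  show ?thesis using fast slow by blast
qed

end
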